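(* Let $K$ be a nonempty, compact and convex subset of a real Hausdorff locally convex topological vector space $X$, let $Y$ be an arbitrary nonempty set and let $U\subseteq K$ be dense in $K$. Let $f:K\times Y\to\mathbb R$ satisfy: (i) for every $y\in Y$ the map $x\mapsto f(x,y)$ is convex on $K$; (ii) $f$ is concavelike on $Y$, i.e. for all $y_1,y_2\in Y$, $t\in[0,1]$ there exists $y_3\in Y$ with $f(x,y_3)\ge(1-t)f(x,y_1)+tf(x,y_2)$ for all $x\in K$; (iii) the family $(f(\cdot,y))_{y\in Y}$ is an equicontinuous family in $C(K)$; (iv) $\sup_{y\in Y}f(x,y)<\infty$ for every $x\in K$. Then $$\inf_{x\in U}\sup_{y\in Y}f(x,y)=\sup_{y\in Y}\inf_{x\in U}f(x,y).$$
   Context: $C(K)$ is the set of continuous real-valued functions on $K$. A family $S\subseteq C(K)$ is equicontinuous if for every $x\in K$ and $\varepsilon>0$ there is a neighborhood $U_x$ of $x$ such that $|h(z)-h(x)|<\varepsilon$ for all $z\in U_x\cap K$ and all $h\in S$. *)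

theory Defs
  imports "HOL-Analysis.Analysis"
begin

definition locally_convex_tvs :: "'a::{real_vector,t2_space} itself \<Rightarrow> bool" where
  "locally_convex_tvs _ \<longleftrightarrow>
     continuous_on UNIV (\<lambda>(x::'a, y::'a). x + y) \<and>
     continuous_on UNIV (\<lambda>(c::real, x::'a). c *\<^sub>R x) \<and>
     (\<forall>x::'a. \<forall>W. open W \<and> x \<in> W \<longrightarrow> (\<exists>V. open V \<and> convex V \<and> x \<in> V \<and> V \<subseteq> W))"

definition equicontinuous_on :: "'a::topological_space set \<Rightarrow> ('a \<Rightarrow> real) set \<Rightarrow> bool" where
  "equicontinuous_on K S \<longleftrightarrow>
     (\<forall>x\<in>K. \<forall>e>0. \<exists>Ux. open Ux \<and> x \<in> Ux \<and>
        (\<forall>z\<in>Ux \<inter> K. \<forall>h\<in>S. \<bar>h z - h x\<bar> < e))"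

definition concavelike_on :: "'a set \<Rightarrow> 'b set \<Rightarrow> ('a \<Rightarrow> 'b \<Rightarrow> real) \<Rightarrow> bool" where
  "concavelike_on K Y f \<longleftrightarrow>
     (\<forall>y1\<in>Y. \<forall>y2\<in>Y. \<forall>t\<in>{0..1::real}. \<exists>y3\<in>Y. \<forall>x\<in>K.
        f x y3 \<ge> (1 - t) * f x y1 + t * f x y2)"

end

theory Submission
  imports Defs
begin

lemma div_combo: "(p::real) + q \<noteq> 0 \<Longrightarrow> p/(p+q)*A + q/(p+q)*B - \<alpha> = (p*(A-\<alpha>) + q*(B-\<alpha>)) / (p+q)"
proof -
  assume ne: "p + q \<noteq> 0"
  have "(p*(A-\<alpha>) + q*(B-\<alpha>)) / (p+q) = (p*A + q*B) / (p+q) - ((p+q)*\<alpha>)/(p+q)"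
    by (simp add: diff_divide_distrib[symmetric] algebra_simps)
  also have "((p+q)*\<alpha>)/(p+q) = \<alpha>" using ne by simp
  finally show ?thesis by (simp add: add_divide_distrib)
qed

lemma two_lemma:
  fixes C :: "'a::real_vector set" and g1 g2 :: "'a \<Rightarrow> real"
  assumes C: "convex C" and c1: "convex_on C g1" and c2: "convex_on C g2"
    and h: "\<And>x. x \<in> C \<Longrightarrow> g1 x \<ge> \<alpha> \<or> g2 x \<ge> \<alpha>"
  shows "\<exists>t\<in>{0..1}. \<forall>x\<in>C. (1-t) * g1 x + t * g2 x \<ge> \<alpha>"
proof (cases "C = {}")
  case True then show ?thesis by auto
next
  case False
  define S where "S = {z::real\<times>real. \<exists>x\<in>C. fst z \<ge> g1 x - \<alpha> \<and> snd z \<ge> g2 x - \<alpha>}"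
  define T where "T = {z::real\<times>real. fst z < 0 \<and> snd z < 0}"
  have cS: "convex S"
  proof (rule convexI)
    fix z1 z2 and u v :: real assume z: "z1 \<in> S" "z2 \<in> S" "0 \<le> u" "0 \<le> v" "u + v = 1"
    from z obtain x1 where x1: "x1 \<in> C" "fst z1 \<ge> g1 x1 - \<alpha>" "snd z1 \<ge> g2 x1 - \<alpha>" by (auto simp: S_def)
    from z obtain x2 where x2: "x2 \<in> C" "fst z2 \<ge> g1 x2 - \<alpha>" "snd z2 \<ge> g2 x2 - \<alpha>" by (auto simp: S_def)
    have u: "u = 1 - v" using z by simp
    have xm: "(1 - v) *\<^sub>R x1 + v *\<^sub>R x2 \<in> C" using C x1 x2 z by (simp add: convex_def)
    have "g1 ((1 - v) *\<^sub>R x1 + v *\<^sub>R x2) \<le> (1-v) * g1 x1 + v * g1 x2"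
      using convex_onD[OF c1, of v x1 x2] x1 x2 z by simp
    also have "\<dots> \<le> (1-v) * (fst z1 + \<alpha>) + v * (fst z2 + \<alpha>)"
      using x1 x2 z by (intro add_mono mult_left_mono) auto
    finally have a1: "g1 ((1 - v) *\<^sub>R x1 + v *\<^sub>R x2) - \<alpha> \<le> fst ((1-v) *\<^sub>R z1 + v *\<^sub>R z2)"
      by (simp add: algebra_simps)
    have "g2 ((1 - v) *\<^sub>R x1 + v *\<^sub>R x2) \<le> (1-v) * g2 x1 + v * g2 x2"
      using convex_onD[OF c2, of v x1 x2] x1 x2 z by simp
    also have "\<dots> \<le> (1-v) * (snd z1 + \<alpha>) + v * (snd z2 + \<alpha>)"
      using x1 x2 z by (intro add_mono mult_left_mono) auto
    finally have a2: "g2 ((1 - v) *\<^sub>R x1 + v *\<^sub>R x2) - \<alpha> \<le> snd ((1-v) *\<^sub>R z1 + v *\<^sub>R z2)"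
      by (simp add: algebra_simps)
    show "u *\<^sub>R z1 + v *\<^sub>R z2 \<in> S" unfolding S_def u using xm a1 a2 by blast
  qed
  have cT: "convex T"
  proof (rule convexI)
    fix z1 z2 and u v :: real assume z: "z1 \<in> T" "z2 \<in> T" "0 \<le> u" "0 \<le> v" "u + v = 1"
    have "u * fst z1 + v * fst z2 < 0"
    proof (cases "u = 0")
      case True then show ?thesis using z by (simp add: T_def)
    next
      case False
      then have "u * fst z1 < 0" using z by (simp add: T_def mult_pos_neg)
      moreover have "v * fst z2 \<le> 0" using z by (simp add: T_def mult_nonneg_nonpos)
      ultimately show ?thesis by linarith
    qed
    moreover have "u * snd z1 + v * snd z2 < 0"
    proof (cases "u = 0")
      case True then show ?thesis using z by (simp add: T_def)
    next
      case False
      then have "u * snd z1 < 0" using z by (simp add: T_def mult_pos_neg)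
      moreover have "v * snd z2 \<le> 0" using z by (simp add: T_def mult_nonneg_nonpos)
      ultimately show ?thesis by linarith
    qed
    ultimately show "u *\<^sub>R z1 + v *\<^sub>R z2 \<in> T" by (simp add: T_def)
  qed
  obtain x0 where "x0 \<in> C" using False by auto
  then have "(g1 x0 - \<alpha>, g2 x0 - \<alpha>) \<in> S" by (auto simp: S_def)
  then have nS: "S \<noteq> {}" by auto
  have nT: "T \<noteq> {}" proof -
    have "((-1::real),(-1::real)) \<in> T" by (simp add: T_def)
    then show ?thesis by auto
  qed
  have dis: "S \<inter> T = {}"
  proof (rule ccontr)
    assume "S \<inter> T \<noteq> {}"
    then obtain z x where "x \<in> C" "fst z \<ge> g1 x - \<alpha>" "snd z \<ge> g2 x - \<alpha>" "fst z < 0" "snd z < 0"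
      by (auto simp: S_def T_def)
    with h[of x] show False by auto
  qed
  obtain w b where w: "w \<noteq> 0" and wS: "\<forall>z\<in>S. inner w z \<le> b" and wT: "\<forall>z\<in>T. inner w z \<ge> b"
    using separating_hyperplane_sets[OF cS cT nS nT dis] by blast
  obtain p q where pq: "w = (p, q)" by (cases w)
  have wT': "\<And>a c. a < 0 \<Longrightarrow> c < 0 \<Longrightarrow> b \<le> p * a + q * c"
    using wT by (auto simp: T_def pq)
  have p0: "p \<le> 0"
  proof (rule ccontr)
    assume "\<not> p \<le> 0"
    then have "p > 0" by simp
    define a where "a = - (\<bar>b\<bar> + \<bar>q\<bar> + 1) / p"
    have "a < 0" using \<open>p > 0\<close> by (simp add: a_def divide_neg_pos add_pos_nonneg)
    have "p * a = - (\<bar>b\<bar> + \<bar>q\<bar> + 1)" using \<open>p > 0\<close> by (simp add: a_def)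
    then have "p * a + q * (-1) < b" by linarith
    with wT'[OF \<open>a < 0\<close>, of "-1"] show False by simp
  qed
  have q0: "q \<le> 0"
  proof (rule ccontr)
    assume "\<not> q \<le> 0"
    then have "q > 0" by simp
    define a where "a = - (\<bar>b\<bar> + \<bar>p\<bar> + 1) / q"
    have "a < 0" using \<open>q > 0\<close> by (simp add: a_def divide_neg_pos add_pos_nonneg)
    have "q * a = - (\<bar>b\<bar> + \<bar>p\<bar> + 1)" using \<open>q > 0\<close> by (simp add: a_def)
    then have "p * (-1) + q * a < b" by linarith
    with wT'[of "-1" a] \<open>a < 0\<close> show False by simp
  qed
  have pqs: "p + q < 0" using p0 q0 w pq by (cases "p = 0"; cases "q = 0") (auto simp: zero_prod_def)
  have key: "p * (g1 x - \<alpha>) + q * (g2 x - \<alpha>) \<le> 0" if x: "x \<in> C" for x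
  proof (rule ccontr)
    define d where "d = p * (g1 x - \<alpha>) + q * (g2 x - \<alpha>)"
    assume "\<not> ?thesis"
    then have d: "d > 0" by (simp add: d_def)
    have "(g1 x - \<alpha>, g2 x - \<alpha>) \<in> S" using x by (auto simp: S_def)
    then have db: "d \<le> b" using wS by (auto simp: pq d_def)
    define e where "e = d / (2 * (- (p + q)))"
    have e: "e > 0" using d pqs by (simp add: e_def)
    have "b \<le> p * (-e) + q * (-e)" using wT'[of "-e" "-e"] e by simp
    also have "p * (-e) + q * (-e) = (-(p+q)) * e" by (simp add: algebra_simps)
    also have "\<dots> = d / 2" using pqs unfolding e_def by (simp add: divide_simps)
    finally show False using db d by simp
  qed
  define t where "t = q / (p + q)"
  have t: "t \<in> {0..1}" using p0 q0 pqs by (auto simp: t_def divide_nonpos_neg)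
  have "(1 - t) * g1 x + t * g2 x \<ge> \<alpha>" if x: "x \<in> C" for x
  proof -
    have "1 - t = p / (p + q)" using pqs by (simp add: t_def field_simps)
    have ne: "p + q \<noteq> 0" using pqs by simp
    have "(1 - t) * g1 x + t * g2 x - \<alpha> = (p / (p+q)) * g1 x + (q / (p+q)) * g2 x - \<alpha>"
      using ne \<open>1 - t = p / (p + q)\<close> by (simp add: t_def)
    also have "\<dots> = (p * (g1 x - \<alpha>) + q * (g2 x - \<alpha>)) / (p + q)"
      using div_combo[OF ne] by simp
    also have "\<dots> \<ge> 0" using key[OF x] pqs by (simp add: divide_nonpos_neg)
    finally show ?thesis by simp
  qed
  then show ?thesis using t by blast
qed


lemma finite_step:
  fixes K :: "'a::real_vector set" and f :: "'a \<Rightarrow> 'b \<Rightarrow> real"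
  assumes Y: "Y \<noteq> {}"
    and conv: "\<And>y. y \<in> Y \<Longrightarrow> convex_on K (\<lambda>x. f x y)"
    and concl: "concavelike_on K Y f"
  shows "finite F \<Longrightarrow> F \<subseteq> Y \<Longrightarrow> C \<subseteq> K \<Longrightarrow> convex C \<Longrightarrow> (\<forall>x\<in>C. \<exists>y\<in>F. f x y \<ge> \<alpha>)
     \<Longrightarrow> \<exists>y\<in>Y. \<forall>x\<in>C. f x y \<ge> \<alpha>"
proof (induction F arbitrary: C rule: finite_induct)
  case empty
  then have "C = {}" by auto
  then show ?case using Y by auto
next
  case (insert y0 F C)
  have y0: "y0 \<in> Y" using insert.prems(1) by simp
  have FY: "F \<subseteq> Y" using insert.prems(1) by simp
  have CK: "C \<subseteq> K" and cvC: "convex C" using insert.prems(2,3) .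
  have cC: "convex_on C (\<lambda>x. f x y0)" using convex_on_subset[OF conv[OF y0] CK cvC] .
  define C' where "C' = {x\<in>C. f x y0 < \<alpha>}"
  have cC': "convex C'"
  proof (rule convexI)
    fix x1 x2 and u v :: real assume z: "x1 \<in> C'" "x2 \<in> C'" "0 \<le> u" "0 \<le> v" "u + v = 1"
    have u: "u = 1 - v" using z by simp
    have m: "(1 - v) *\<^sub>R x1 + v *\<^sub>R x2 \<in> C" using cvC z by (simp add: C'_def convex_def)
    have "f ((1 - v) *\<^sub>R x1 + v *\<^sub>R x2) y0 \<le> (1-v) * f x1 y0 + v * f x2 y0"
      using convex_onD[OF cC, of v x1 x2] z by (simp add: C'_def)
    also have "\<dots> < \<alpha>"
    proof (cases "v = 0")
      case True then show ?thesis using z by (simp add: C'_def)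
    next
      case False
      then have "v * f x2 y0 < v * \<alpha>" using z by (simp add: C'_def)
      moreover have "(1-v) * f x1 y0 \<le> (1-v) * \<alpha>" using z by (intro mult_left_mono) (auto simp: C'_def)
      ultimately show ?thesis by (simp add: algebra_simps)
    qed
    finally show "u *\<^sub>R x1 + v *\<^sub>R x2 \<in> C'" using m u by (simp add: C'_def)
  qed
  have "\<forall>x\<in>C'. \<exists>y\<in>F. f x y \<ge> \<alpha>"
  proof
    fix x assume x: "x \<in> C'"
    then have "x \<in> C" "f x y0 < \<alpha>" by (auto simp: C'_def)
    then obtain y where "y \<in> insert y0 F" "f x y \<ge> \<alpha>" using insert.prems(4) by blast
    then show "\<exists>y\<in>F. f x y \<ge> \<alpha>" using \<open>f x y0 < \<alpha>\<close> by auto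
  qed
  then obtain y' where y': "y' \<in> Y" "\<forall>x\<in>C'. f x y' \<ge> \<alpha>"
  proof -
    have "C' \<subseteq> K" using CK by (auto simp: C'_def)
    then show ?thesis using insert.IH[OF FY _ cC'] \<open>\<forall>x\<in>C'. \<exists>y\<in>F. f x y \<ge> \<alpha>\<close> that by blast
  qed
  have cC2: "convex_on C (\<lambda>x. f x y')" using convex_on_subset[OF conv[OF y'(1)] CK cvC] .
  have "\<exists>t\<in>{0..1}. \<forall>x\<in>C. (1-t) * f x y' + t * f x y0 \<ge> \<alpha>"
  proof (rule two_lemma[OF cvC cC2 cC])
    fix x assume "x \<in> C"
    then show "f x y' \<ge> \<alpha> \<or> f x y0 \<ge> \<alpha>" using y' by (auto simp: C'_def)
  qed
  then obtain t where t: "t \<in> {0..1}" "\<forall>x\<in>C. (1-t) * f x y' + t * f x y0 \<ge> \<alpha>" by blast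
  obtain y3 where y3: "y3 \<in> Y" "\<forall>x\<in>K. f x y3 \<ge> (1-t) * f x y' + t * f x y0"
    using concl y'(1) y0 t(1) unfolding concavelike_on_def by blast
  show ?case
  proof (intro bexI[OF _ y3(1)] ballI)
    fix x assume x: "x \<in> C"
    then have "x \<in> K" using CK by auto
    then have "f x y3 \<ge> (1-t) * f x y' + t * f x y0" using y3(2) by blast
    moreover have "(1-t) * f x y' + t * f x y0 \<ge> \<alpha>" using t(2) x by blast
    ultimately show "f x y3 \<ge> \<alpha>" by linarith
  qed
qed

theorem mainTheorem15:
  fixes K U :: "'a::{real_vector,t2_space} set"
    and Y :: "'b set"
    and f :: "'a \<Rightarrow> 'b \<Rightarrow> real"
  assumes lctvs: "locally_convex_tvs TYPE('a)"
    and K: "K \<noteq> {}" "compact K" "convex K"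
    and Y: "Y \<noteq> {}"
    and U: "U \<subseteq> K" "K \<subseteq> closure U"
    and conv: "\<And>y. y \<in> Y \<Longrightarrow> convex_on K (\<lambda>x. f x y)"
    and concl: "concavelike_on K Y f"
    and cont: "\<And>y. y \<in> Y \<Longrightarrow> continuous_on K (\<lambda>x. f x y)"
    and equi: "equicontinuous_on K ((\<lambda>y x. f x y) ` Y)"
    and bdd: "\<And>x. x \<in> K \<Longrightarrow> bdd_above ((\<lambda>y. f x y) ` Y)"
  shows "(INF x\<in>U. SUP y\<in>Y. ereal (f x y)) = (SUP y\<in>Y. INF x\<in>U. ereal (f x y))"
proof (rule antisym)
  show "(SUP y\<in>Y. INF x\<in>U. ereal (f x y)) \<le> (INF x\<in>U. SUP y\<in>Y. ereal (f x y))"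
  proof (intro SUP_least INF_greatest)
    fix y x assume "y \<in> Y" "x \<in> U"
    then show "(INF x\<in>U. ereal (f x y)) \<le> (SUP y\<in>Y. ereal (f x y))"
      by (intro order_trans[OF INF_lower SUP_upper])
  qed
next
  show "(INF x\<in>U. SUP y\<in>Y. ereal (f x y)) \<le> (SUP y\<in>Y. INF x\<in>U. ereal (f x y))"
  proof (rule ccontr)
    assume "\<not> ?thesis"
    then have lt: "(SUP y\<in>Y. INF x\<in>U. ereal (f x y)) < (INF x\<in>U. SUP y\<in>Y. ereal (f x y))" by simp
    obtain \<alpha> where a: "(SUP y\<in>Y. INF x\<in>U. ereal (f x y)) < ereal \<alpha>" "ereal \<alpha> < (INF x\<in>U. SUP y\<in>Y. ereal (f x y))"
      using ereal_dense2[OF lt] by blast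
    obtain \<beta> where b: "(SUP y\<in>Y. INF x\<in>U. ereal (f x y)) < ereal \<beta>" "ereal \<beta> < ereal \<alpha>"
      using ereal_dense2[OF a(1)] by blast
    have ab: "\<beta> < \<alpha>" using b by simp
    have sa: "\<exists>y\<in>Y. f u y > \<alpha>" if u: "u \<in> U" for u
    proof -
      have "ereal \<alpha> < (SUP y\<in>Y. ereal (f u y))"
        using a(2) INF_lower[OF u, of "\<lambda>x. SUP y\<in>Y. ereal (f x y)"] by (rule order_less_le_trans)
      then show ?thesis by (auto simp: less_SUP_iff)
    qed
    have sb: "\<exists>y\<in>Y. f x y > \<beta>" if x: "x \<in> K" for x
    proof -
      obtain Ux where Ux: "open Ux" "x \<in> Ux" and
        h: "\<forall>z\<in>Ux \<inter> K. \<forall>h\<in>(\<lambda>y x. f x y) ` Y. \<bar>h z - h x\<bar> < \<alpha> - \<beta>"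
        proof -
        have e: "\<alpha> - \<beta> > 0" using ab by simp
        have "\<forall>x\<in>K. \<forall>e>0. \<exists>Ux. open Ux \<and> x \<in> Ux \<and>
          (\<forall>z\<in>Ux \<inter> K. \<forall>h\<in>(\<lambda>y x. f x y) ` Y. \<bar>h z - h x\<bar> < e)"
          using equi unfolding equicontinuous_on_def .
        then show ?thesis using x e that by blast
      qed
      have "Ux \<inter> closure U \<noteq> {}" using Ux x U by auto
      then have "Ux \<inter> U \<noteq> {}" using open_Int_closure_eq_empty[OF Ux(1)] by simp
      then obtain u where u: "u \<in> Ux" "u \<in> U" by auto
      obtain y where y: "y \<in> Y" "f u y > \<alpha>" using sa[OF u(2)] by blast
      have "\<bar>f u y - f x y\<bar> < \<alpha> - \<beta>" using h u U y by auto
      then show ?thesis using y by (intro bexI[OF _ y(1)]) linarith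
    qed
    have "\<forall>y\<in>Y. \<exists>A. open A \<and> A \<inter> K = (\<lambda>x. f x y) -` {\<beta><..} \<inter> K"
    proof
      fix y assume "y \<in> Y"
      then have "continuous_on K (\<lambda>x. f x y)" by (rule cont)
      then show "\<exists>A. open A \<and> A \<inter> K = (\<lambda>x. f x y) -` {\<beta><..} \<inter> K"
        unfolding continuous_on_open_invariant using open_greaterThan by blast
    qed
    then obtain V where V: "\<And>y. y \<in> Y \<Longrightarrow> open (V y) \<and> V y \<inter> K = (\<lambda>x. f x y) -` {\<beta><..} \<inter> K"
      by (rule bchoice[THEN exE]) blast
    have cov: "K \<subseteq> (\<Union>y\<in>Y. V y)"
    proof
      fix x assume x: "x \<in> K"
      obtain y where y: "y \<in> Y" "f x y > \<beta>" using sb[OF x] by blast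
      then have "x \<in> V y" using V[OF y(1)] x by auto
      then show "x \<in> (\<Union>y\<in>Y. V y)" using y by auto
    qed
    obtain F where F: "F \<subseteq> Y" "finite F" "K \<subseteq> (\<Union>y\<in>F. V y)"
      using compactE_image[OF K(2), of Y V] V cov by blast
    have "\<forall>x\<in>K. \<exists>y\<in>F. f x y \<ge> \<beta>"
    proof
      fix x assume x: "x \<in> K"
      then obtain y where y: "y \<in> F" "x \<in> V y" using F by auto
      then have "f x y > \<beta>" using V[of y] F x by auto
      then show "\<exists>y\<in>F. f x y \<ge> \<beta>" using y(1) less_imp_le by blast
    qed
    then obtain y where y: "y \<in> Y" "\<forall>x\<in>K. f x y \<ge> \<beta>"
      using finite_step[OF Y conv concl F(2) F(1) order_refl K(3)] by blast
    have "ereal \<beta> \<le> (INF x\<in>U. ereal (f x y))"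
      using y U by (intro INF_greatest) auto
    also have "\<dots> \<le> (SUP y\<in>Y. INF x\<in>U. ereal (f x y))"
      using y by (intro SUP_upper)
    finally show False using b(1) by simp
  qed
qed

end
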